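(* The assignment $P(x_1,\dots,x_k)\mapsto\mathfrak q^{-\frac{k(k-1)}2}\prod_{1\le r\ne s\le k}\frac{x_r-x_s}{x_r-\mathfrak q^{-1}x_s}\cdot P(x_1^{-1},\dots,x_k^{-1})$ (for $P\in\mathbb S_k$, all $k$) defines an algebra isomorphism $\eta:\mathbb S\to\mathbb S^{\mathrm{DFK}}$, which restricts to an algebra isomorphism $S\to S^{\mathrm{DFK}}$.
   Context: Let $\mathfrak q,\mathfrak t\in\mathbb C^\times$ be such that $q_1=\mathfrak q$, $q_2=1/\mathfrak t$, $q_3=\mathfrak t/\mathfrak q$ are not roots of unity. $\mathbb S=\bigoplus_{k\ge0}\mathbb S_k$ with $\mathbb S_k$ the space of $f(x_1,\dots,x_k)/\prod_{1\le r\ne s\le k}(x_r-x_s)$, $f\in\mathbb C[x_1^{\pm1},\dots,x_k^{\pm1}]^{S(k)}$, with product $F\star G=\frac{1}{k!\ell!}\mathrm{Sym}_{x_1,\dots,x_{k+\ell}}\big(F(x_1,\dots,x_k)G(x_{k+1},\dots,x_{k+\ell})\prod_{r\le k<r'}\zeta(x_r/x_{r'})\big)$, $\zeta(z/w)=\frac{(z-q_1^{-1}w)(z-q_2^{-1}w)(z-q_3^{-1}w)}{(z-w)^3}$; $S\subset\mathbb S$ is the subspace of $F$ with $F=0$ whenever $\{x_1/x_2,x_2/x_3,x_3/x_1\}=\{q_1,q_2,q_3\}$. $\mathbb S^{\mathrm{DFK}}=\bigoplus_k\mathbb S^{\mathrm{DFK}}_k$ with $\mathbb S^{\mathrm{DFK}}_k$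 the space of $f(x_1,\dots,x_k)/\prod_{1\le r\ne s\le k}(x_r-\mathfrak q^{-1}x_s)$, $f\in\mathbb C[x_1^{\pm1},\dots,x_k^{\pm1}]^{S(k)}$, with the analogous shuffle product using $\zeta^{\mathrm{DFK}}(x)=\frac{(1-\mathfrak tx)(1-\mathfrak q\mathfrak t^{-1}x)}{(1-x)(1-\mathfrak qx)}$ in place of $\zeta$; $S^{\mathrm{DFK}}\subset\mathbb S^{\mathrm{DFK}}$ is the subspace of $F$ whose numerator $f$ vanishes whenever $\{x_1/x_2,x_2/x_3,x_3/x_1\}=\{\mathfrak q,1/\mathfrak t,\mathfrak t/\mathfrak q\}$. *)

theory Defs
  imports Complex_Main "HOL-Combinatorics.Permutations"
begin

type_synonym pt = "nat \<Rightarrow> complex"      (* a point (x_0, x_1, ...); only x_0..x_{k-1} matter *)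
type_synonym fn = "pt \<Rightarrow> complex"

definition offdiag :: "nat \<Rightarrow> (nat \<times> nat) set" where
  "offdiag k = {(r,s). r < k \<and> s < k \<and> r \<noteq> s}"

(* f is a Laurent polynomial in x_0,...,x_{k-1} (as a total function; 0 powi (-n) = 0 is junk) *)
definition laurent_poly :: "nat \<Rightarrow> fn \<Rightarrow> bool" where
  "laurent_poly k f \<longleftrightarrow> (\<exists>A c. finite (A :: (nat \<Rightarrow> int) set) \<and>
      (\<forall>x. f x = (\<Sum>\<alpha>\<in>A. c \<alpha> * (\<Prod>i<k. x i powi \<alpha> i))))"

definition symmetric_fn :: "nat \<Rightarrow> fn \<Rightarrow> bool" where
  "symmetric_fn k f \<longleftrightarrow> (\<forall>\<sigma>. \<sigma> permutes {..<k} \<longrightarrow> (\<forall>x. f (x \<circ> \<sigma>) = f x))"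

(* numerators: symmetric Laurent polynomials in k variables (same space for S_k and S^DFK_k) *)
definition SymLaurent :: "nat \<Rightarrow> fn set" where
  "SymLaurent k = {f. laurent_poly k f \<and> symmetric_fn k f}"

definition torus :: "nat \<Rightarrow> pt \<Rightarrow> bool" where
  "torus k x \<longleftrightarrow> (\<forall>i<k. x i \<noteq> 0)"

(* Zariski-open set of points where all rational expressions below are defined *)
definition generic :: "complex \<Rightarrow> nat \<Rightarrow> pt \<Rightarrow> bool" where
  "generic q k x \<longleftrightarrow> torus k x \<and> (\<forall>(r,s)\<in>offdiag k. x r \<noteq> x s \<and> x r \<noteq> q * x s)"

(* the element F = f / prod_{r<>s}(x_r - x_s) of S_k, as a rational function *)
definition valS :: "nat \<Rightarrow> fn \<Rightarrow> fn" where
  "valS k f x = f x / (\<Prod>(r,s)\<in>offdiag k. (x r - x s))"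

(* the element F = f / prod_{r<>s}(x_r - q^{-1} x_s) of S^DFK_k *)
definition valD :: "complex \<Rightarrow> nat \<Rightarrow> fn \<Rightarrow> fn" where
  "valD q k f x = f x / (\<Prod>(r,s)\<in>offdiag k. (x r - x s / q))"

(* zeta(z/w) as a function of w' = z/w, with q1 = q, q2 = 1/t, q3 = t/q *)
definition zeta :: "complex \<Rightarrow> complex \<Rightarrow> complex \<Rightarrow> complex" where
  "zeta q t w = (w - 1/q) * (w - t) * (w - q/t) / (w - 1)^3"

definition zetaD :: "complex \<Rightarrow> complex \<Rightarrow> complex \<Rightarrow> complex" where
  "zetaD q t w = (1 - t * w) * (1 - (q/t) * w) / ((1 - w) * (1 - q * w))"

definition shuffle_val :: "(complex \<Rightarrow> complex) \<Rightarrow> nat \<Rightarrow> nat \<Rightarrow> fn \<Rightarrow> fn \<Rightarrow> fn" where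
  "shuffle_val z k l F G x = (1 / (fact k * fact l)) *
     (\<Sum>\<sigma>\<in>{\<sigma>. \<sigma> permutes {..<k+l}}.
        F (\<lambda>i. x (\<sigma> i)) * G (\<lambda>i. x (\<sigma> (k + i))) *
        (\<Prod>r<k. \<Prod>r'\<in>{k..<k+l}. z (x (\<sigma> r) / x (\<sigma> r'))))"

definition eta_val :: "complex \<Rightarrow> nat \<Rightarrow> fn \<Rightarrow> fn" where
  "eta_val q k P x = inverse (q ^ (k * (k - 1) div 2)) *
     (\<Prod>(r,s)\<in>offdiag k. (x r - x s) / (x r - x s / q)) * P (\<lambda>i. inverse (x i))"

(* eta on numerators: the numerator of the DFK element given by the formula *)
definition eta :: "complex \<Rightarrow> nat \<Rightarrow> fn \<Rightarrow> fn" where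
  "eta q k f = (THE g. g \<in> SymLaurent k \<and>
      (\<forall>x. generic q k x \<longrightarrow> valD q k g x = eta_val q k (valS k f) x))"

definition wheel :: "complex \<Rightarrow> complex \<Rightarrow> pt \<Rightarrow> bool" where
  "wheel q t x \<longleftrightarrow> {x 0 / x 1, x 1 / x 2, x 2 / x 0} = {q, 1/t, t/q}"

(* S_k: F vanishes (wherever defined) when {x1/x2,x2/x3,x3/x1} = {q1,q2,q3} *)
definition S_wheel :: "complex \<Rightarrow> complex \<Rightarrow> nat \<Rightarrow> fn set" where
  "S_wheel q t k = {f \<in> SymLaurent k. 3 \<le> k \<longrightarrow>
     (\<forall>x. torus k x \<and> wheel q t x \<and> (\<Prod>(r,s)\<in>offdiag k. (x r - x s)) \<noteq> 0 \<longrightarrow> valS k f x = 0)}"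

definition DFK_wheel :: "complex \<Rightarrow> complex \<Rightarrow> nat \<Rightarrow> fn set" where
  "DFK_wheel q t k = {f \<in> SymLaurent k. 3 \<le> k \<longrightarrow>
     (\<forall>x. torus k x \<and> wheel q t x \<longrightarrow> f x = 0)}"

end

theory Submission
  imports Defs "HOL-Computational_Algebra.Polynomial"
begin


lemma one_var:
  fixes N :: "int set" and b :: "int \<Rightarrow> complex" and F :: "complex set"
  assumes fN: "finite N" and fF: "finite F"
    and z: "\<And>z. z \<notin> F \<Longrightarrow> (\<Sum>n\<in>N. b n * z powi n) = 0"
  shows "\<forall>n\<in>N. b n = 0"
proof -
  define M where "M = (\<Sum>n\<in>N. nat \<bar>n\<bar>)"
  have M: "n \<in> N \<Longrightarrow> n + int M \<ge> 0" for n
  proof -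
    assume "n \<in> N"
    then have "nat \<bar>n\<bar> \<le> M" unfolding M_def using fN by (intro member_le_sum) auto
    then show ?thesis by linarith
  qed
  define p where "p = (\<Sum>n\<in>N. monom (b n) (nat (n + int M)))"
  have pz: "poly p z = z ^ M * (\<Sum>n\<in>N. b n * z powi n)" if "z \<noteq> 0" for z
  proof -
    have "poly p z = (\<Sum>n\<in>N. b n * z ^ nat (n + int M))"
      unfolding p_def by (simp add: poly_sum poly_monom)
    also have "\<dots> = (\<Sum>n\<in>N. z ^ M * (b n * z powi n))"
    proof (rule sum.cong[OF refl])
      fix n assume "n \<in> N"
      then have "z ^ nat (n + int M) = z powi (n + int M)"
        using M by (simp add: power_int_nonneg_exp)
      also have "\<dots> = z powi n * z ^ M" using that by (simp add: power_int_add)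
      finally show "b n * z ^ nat (n + int M) = z ^ M * (b n * z powi n)" by simp
    qed
    finally show ?thesis by (simp add: sum_distrib_left)
  qed
  have "p = 0"
  proof (rule ccontr)
    assume "p \<noteq> 0"
    then have "finite {z. poly p z = 0}" by (rule poly_roots_finite)
    moreover have "- (F \<union> {0}) \<subseteq> {z. poly p z = 0}" using pz z by auto
    moreover have "infinite (- (F \<union> {0}) :: complex set)"
      using fF by (simp add: Compl_eq_Diff_UNIV infinite_UNIV_char_0 Diff_infinite_finite)
    ultimately show False using finite_subset by blast
  qed
  show ?thesis
  proof
    fix m assume m: "m \<in> N"
    have "coeff p (nat (m + int M)) = (\<Sum>n\<in>N. if nat (n + int M) = nat (m + int M) then b n else 0)"
      unfolding p_def by (simp add: coeff_sum)
    also have "\<dots> = (\<Sum>n\<in>N. if n = m then b n else 0)"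
    proof (rule sum.cong[OF refl])
      fix n assume "n \<in> N"
      then have "nat (n + int M) = nat (m + int M) \<longleftrightarrow> n = m" using M[of n] M[OF m] by (auto simp add: nat_eq_iff2)
      then show "(if nat (n + int M) = nat (m + int M) then b n else 0) = (if n = m then b n else 0)" by simp
    qed
    also have "\<dots> = b m" using m fN by simp
    finally show "b m = 0" using \<open>p = 0\<close> by simp
  qed
qed



definition lp :: "(nat \<Rightarrow> int) set \<Rightarrow> ((nat \<Rightarrow> int) \<Rightarrow> complex) \<Rightarrow> nat \<Rightarrow> fn" where
  "lp A c k x = (\<Sum>\<alpha>\<in>A. c \<alpha> * (\<Prod>i<k. x i powi \<alpha> i))"

lemma generic_Suc:
  "generic q (Suc m) y \<longleftrightarrow> generic q m y \<and> y m \<noteq> 0 \<and>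
     (\<forall>j<m. y m \<noteq> y j \<and> y j \<noteq> y m \<and> y m \<noteq> q * y j \<and> y j \<noteq> q * y m)"
  unfolding generic_def offdiag_def torus_def
  by (auto simp: less_Suc_eq)

lemma generic_cong: "(\<And>i. i < k \<Longrightarrow> x i = y i) \<Longrightarrow> generic q k x = generic q k y"
  unfolding generic_def offdiag_def torus_def by auto

lemma lp_cong: "(\<And>i. i < k \<Longrightarrow> x i = y i) \<Longrightarrow> lp A c k x = lp A c k y"
  unfolding lp_def by simp

lemma lp_zero:
  assumes "q \<noteq> 0"
  shows "finite A \<Longrightarrow> (\<forall>x. generic q m x \<longrightarrow> lp A c m x = 0) \<Longrightarrow> lp A c m x = 0"
proof (induction m arbitrary: A c x)
  case 0
  then show ?case unfolding generic_def offdiag_def torus_def by auto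
next
  case (Suc m)
  define N where "N = (\<lambda>\<alpha>. \<alpha> m) ` A"
  define An where "An n = {\<alpha>\<in>A. \<alpha> m = n}" for n
  have fN: "finite N" using Suc.prems unfolding N_def by auto
  have fAn: "finite (An n)" for n using Suc.prems unfolding An_def by auto
  have decomp: "lp A c (Suc m) y = (\<Sum>n\<in>N. lp (An n) c m y * y m powi n)" for y
  proof -
    have "lp A c (Suc m) y = (\<Sum>\<alpha>\<in>A. c \<alpha> * (\<Prod>i<m. y i powi \<alpha> i) * y m powi \<alpha> m)"
      unfolding lp_def by (simp add: mult.assoc)
    also have "\<dots> = (\<Sum>n\<in>N. \<Sum>\<alpha>\<in>An n. c \<alpha> * (\<Prod>i<m. y i powi \<alpha> i) * y m powi \<alpha> m)"
      unfolding N_def An_def by (rule sum.image_gen[OF Suc.prems(1)])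
    also have "\<dots> = (\<Sum>n\<in>N. lp (An n) c m y * y m powi n)"
      unfolding lp_def An_def by (simp add: sum_distrib_right)
    finally show ?thesis .
  qed
  have zero: "lp (An n) c m y = 0" if "n \<in> N" for n y
  proof (rule Suc.IH[OF fAn], intro allI impI)
    fix x assume gx: "generic q m x"
    define F where "F = {0} \<union> x ` {..<m} \<union> (\<lambda>j. q * x j) ` {..<m} \<union> (\<lambda>j. x j / q) ` {..<m}"
    have "\<forall>n\<in>N. lp (An n) c m x = 0"
    proof (rule one_var[OF fN, of F])
      show "finite F" unfolding F_def by auto
      fix z assume z: "z \<notin> F"
      have g: "generic q (Suc m) (x(m := z))"
        unfolding generic_Suc
      proof (intro conjI allI impI)
        show "generic q m (x(m := z))" using gx by (subst generic_cong[of m _ x]) auto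
        show "(x(m := z)) m \<noteq> 0" using z unfolding F_def by auto
        fix j assume j: "j < m"
        show "(x(m := z)) m \<noteq> (x(m := z)) j" using z j unfolding F_def by auto
        show "(x(m := z)) j \<noteq> (x(m := z)) m" using z j unfolding F_def by auto
        show "(x(m := z)) m \<noteq> q * (x(m := z)) j" using z j unfolding F_def by auto
        show "(x(m := z)) j \<noteq> q * (x(m := z)) m"
        proof
          assume "(x(m := z)) j = q * (x(m := z)) m"
          then have "z = x j / q" using j assms by (auto simp: field_simps)
          then show False using z j unfolding F_def by auto
        qed
      qed
      have "0 = lp A c (Suc m) (x(m := z))" using Suc.prems(2)[rule_format, OF g] by simp
      also have "\<dots> = (\<Sum>n\<in>N. lp (An n) c m x * z powi n)"
        unfolding decomp by (simp add: lp_cong[of m "x(m:=z)" x])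
      finally show "(\<Sum>n\<in>N. lp (An n) c m x * z powi n) = 0" by simp
    qed
    then show "lp (An n) c m x = 0" using that by auto
  qed
  show ?case unfolding decomp using zero by simp
qed



lemma laurent_lp: "laurent_poly k f \<longleftrightarrow> (\<exists>A c. finite A \<and> f = lp A c k)"
  unfolding laurent_poly_def lp_def by (auto simp: fun_eq_iff)

lemma laurent_gen:
  fixes B :: "'b set"
  assumes "finite B" and "\<And>x. h x = (\<Sum>b\<in>B. d b * (\<Prod>i<k. x i powi e b i))"
  shows "laurent_poly k h"
  unfolding laurent_poly_def
proof (intro exI conjI allI)
  show "finite (e ` B)" using assms by auto
  fix x :: pt
  have "h x = (\<Sum>\<beta>\<in>e ` B. \<Sum>b\<in>{b\<in>B. e b = \<beta>}. d b * (\<Prod>i<k. x i powi e b i))"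
    unfolding assms(2) by (rule sum.image_gen[OF assms(1)])
  also have "\<dots> = (\<Sum>\<beta>\<in>e ` B. (\<Sum>b\<in>{b\<in>B. e b = \<beta>}. d b) * (\<Prod>i<k. x i powi \<beta> i))"
    by (simp add: sum_distrib_right)
  finally show "h x = (\<Sum>\<beta>\<in>e ` B. (\<lambda>\<beta>. \<Sum>b\<in>{b\<in>B. e b = \<beta>}. d b) \<beta> * (\<Prod>i<k. x i powi \<beta> i))" .
qed

lemma laurent_lin:
  assumes "laurent_poly k f" "laurent_poly k g"
  shows "laurent_poly k (\<lambda>x. a * f x + b * g x)"
proof -
  obtain A1 c1 where 1: "finite A1" "\<And>x. f x = lp A1 c1 k x" using assms(1) unfolding laurent_lp by auto
  obtain A2 c2 where 2: "finite A2" "\<And>x. g x = lp A2 c2 k x" using assms(2) unfolding laurent_lp by auto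
  show ?thesis
  proof (rule laurent_gen[where B = "A1 <+> A2" and d = "case_sum (\<lambda>\<alpha>. a * c1 \<alpha>) (\<lambda>\<alpha>. b * c2 \<alpha>)"
        and e = "case_sum id id"])
    show "finite (A1 <+> A2)" using 1 2 by auto
    fix x :: pt show "a * f x + b * g x = (\<Sum>\<beta>\<in>A1 <+> A2. case_sum (\<lambda>\<alpha>. a * c1 \<alpha>) (\<lambda>\<alpha>. b * c2 \<alpha>) \<beta> *
           (\<Prod>i<k. x i powi case_sum id id \<beta> i))"
      using 1 2 by (simp add: sum.Plus lp_def sum_distrib_left mult.assoc)
  qed
qed

lemma laurent_scale: "laurent_poly k f \<Longrightarrow> laurent_poly k (\<lambda>x. a * f x)"
  using laurent_lin[of k f f a 0] by simp

lemma laurent_add: "laurent_poly k f \<Longrightarrow> laurent_poly k g \<Longrightarrow> laurent_poly k (\<lambda>x. f x + g x)"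
  using laurent_lin[of k f g 1 1] by simp

lemma laurent_unique:
  assumes "q \<noteq> 0" "laurent_poly k f" "laurent_poly k g" "\<And>x. generic q k x \<Longrightarrow> f x = g x"
  shows "f = g"
proof -
  have "laurent_poly k (\<lambda>x. 1 * f x + (-1) * g x)" by (rule laurent_lin[OF assms(2,3)])
  then obtain A c where Ac: "finite A" "\<And>x. f x - g x = lp A c k x" unfolding laurent_lp by (auto simp: fun_eq_iff)
  have "lp A c k x = 0" for x
    by (rule lp_zero[OF assms(1) Ac(1)]) (use Ac(2) assms(4) in \<open>metis right_minus_eq\<close>)
  then show ?thesis using Ac(2) by (auto simp: fun_eq_iff)
qed

lemma laurent_perm:
  assumes "laurent_poly k f" "\<sigma> permutes {..<k}"
  shows "laurent_poly k (\<lambda>x. f (x \<circ> \<sigma>))"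
proof -
  obtain A c where Ac: "finite A" "\<And>x. f x = lp A c k x" using assms(1) unfolding laurent_lp by auto
  show ?thesis
  proof (rule laurent_gen[OF Ac(1), where d = c and e = "\<lambda>\<alpha>. \<alpha> \<circ> inv \<sigma>"])
    fix x :: pt
    have "(\<Prod>i<k. x (\<sigma> i) powi \<alpha> i) = (\<Prod>i<k. x i powi (\<alpha> \<circ> inv \<sigma>) i)" for \<alpha>
    proof -
      have "(\<Prod>i<k. x i powi (\<alpha> \<circ> inv \<sigma>) i) = (\<Prod>i\<in>\<sigma> ` {..<k}. x i powi (\<alpha> \<circ> inv \<sigma>) i)"
        using permutes_image[OF assms(2)] by simp
      also have "\<dots> = (\<Prod>i<k. x (\<sigma> i) powi \<alpha> (inv \<sigma> (\<sigma> i)))"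
        by (subst prod.reindex) (use permutes_inj_on[OF assms(2)] in auto)
      also have "\<dots> = (\<Prod>i<k. x (\<sigma> i) powi \<alpha> i)"
        using permutes_inverses(2)[OF assms(2)] by simp
      finally show ?thesis by simp
    qed
    then show "f (x \<circ> \<sigma>) = (\<Sum>\<alpha>\<in>A. c \<alpha> * (\<Prod>i<k. x i powi (\<alpha> \<circ> inv \<sigma>) i))"
      unfolding Ac(2) lp_def by simp
  qed
qed



definition Cq :: "complex \<Rightarrow> nat \<Rightarrow> complex" where "Cq q k = inverse (q ^ (k * (k - 1) div 2))"
definition Pk :: "nat \<Rightarrow> pt \<Rightarrow> complex" where "Pk k x = (\<Prod>i<k. x i ^ (2 * (k - 1)))"
definition iv :: "pt \<Rightarrow> pt" where "iv x = (\<lambda>i. inverse (x i))"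

lemma finite_offdiag[simp]: "finite (offdiag k)"
  unfolding offdiag_def by (rule finite_subset[of _ "{..<k} \<times> {..<k}"]) auto

lemma offdiag_swap: "(\<Prod>(r,s)\<in>offdiag k. g r s) = (\<Prod>(r,s)\<in>offdiag k. (g s r :: complex))"
  by (rule prod.reindex_bij_witness[where i = "\<lambda>(r,s). (s,r)" and j = "\<lambda>(r,s). (s,r)"])
     (auto simp: offdiag_def)

lemma offdiag_Sigma: "offdiag k = Sigma {..<k} (\<lambda>r. {..<k} - {r})"
  unfolding offdiag_def by auto

lemma offdiag_first: "(\<Prod>(r,s)\<in>offdiag k. h r) = (\<Prod>r<k. (h r :: complex) ^ (k - 1))"
proof -
  have "(\<Prod>(r,s)\<in>offdiag k. h r) = (\<Prod>r<k. \<Prod>s\<in>{..<k} - {r}. h r)"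
    unfolding offdiag_Sigma by (subst prod.Sigma) auto
  also have "\<dots> = (\<Prod>r<k. h r ^ (k - 1))"
    by (rule prod.cong[OF refl]) simp
  finally show ?thesis .
qed

lemma generic_torus: "generic q k x \<Longrightarrow> torus k x"
  unfolding generic_def by auto

lemma generic_V: "generic q k x \<Longrightarrow> (\<Prod>(r,s)\<in>offdiag k. x r - x s) \<noteq> 0"
  unfolding generic_def by (auto simp: prod_zero_iff)

lemma generic_D: "q \<noteq> 0 \<Longrightarrow> generic q k x \<Longrightarrow> (\<Prod>(r,s)\<in>offdiag k. x r - x s / q) \<noteq> 0"
proof -
  assume q: "q \<noteq> 0" and g: "generic q k x"
  have "x r - x s / q \<noteq> 0" if "(r,s) \<in> offdiag k" for r s
  proof
    assume "x r - x s / q = 0"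
    then have "x s = q * x r" using q by (auto simp: field_simps)
    moreover have "(s,r) \<in> offdiag k" using that unfolding offdiag_def by auto
    ultimately show False using g unfolding generic_def by auto
  qed
  then show ?thesis by (auto simp: prod_zero_iff)
qed

lemma Pk_offdiag: "(\<Prod>(r,s)\<in>offdiag k. x r * x s) = Pk k x"
proof -
  have "(\<Prod>(r,s)\<in>offdiag k. x r * x s) = (\<Prod>(r,s)\<in>offdiag k. x r) * (\<Prod>(r,s)\<in>offdiag k. x s)"
    by (simp add: prod.distrib case_prod_beta)
  also have "(\<Prod>(r,s)\<in>offdiag k. x s) = (\<Prod>(r,s)\<in>offdiag k. x r)"
    by (rule offdiag_swap)
  also have "(\<Prod>(r,s)\<in>offdiag k. x r) = (\<Prod>r<k. x r ^ (k - 1))" by (rule offdiag_first)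
  finally show ?thesis unfolding Pk_def
    by (simp add: prod.distrib[symmetric] power_add[symmetric] mult_2)
qed

lemma inv_offdiag:
  assumes "torus k x"
  shows "(\<Prod>(r,s)\<in>offdiag k. inverse (x r) - inverse (x s)) = (\<Prod>(r,s)\<in>offdiag k. x r - x s) / Pk k x"
proof -
  have "(\<Prod>(r,s)\<in>offdiag k. inverse (x r) - inverse (x s)) = (\<Prod>(r,s)\<in>offdiag k. (x s - x r) / (x r * x s))"
    by (rule prod.cong[OF refl]) (use assms in \<open>auto simp: offdiag_def torus_def field_simps\<close>)
  also have "\<dots> = (\<Prod>(r,s)\<in>offdiag k. x s - x r) / (\<Prod>(r,s)\<in>offdiag k. x r * x s)"
    by (simp add: prod_dividef case_prod_beta)
  also have "(\<Prod>(r,s)\<in>offdiag k. x s - x r) = (\<Prod>(r,s)\<in>offdiag k. x r - x s)"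
    by (rule offdiag_swap)
  finally show ?thesis by (simp add: Pk_offdiag)
qed

lemma eta_val_generic:
  assumes q: "q \<noteq> 0" and g: "generic q k x"
  shows "eta_val q k (valS k f) x = Cq q k * Pk k x * f (iv x) / (\<Prod>(r,s)\<in>offdiag k. x r - x s / q)"
proof -
  let ?V = "\<Prod>(r,s)\<in>offdiag k. x r - x s"
  let ?D = "\<Prod>(r,s)\<in>offdiag k. x r - x s / q"
  have V: "?V \<noteq> 0" by (rule generic_V[OF g])
  have P: "Pk k x \<noteq> 0" using generic_torus[OF g] unfolding Pk_def torus_def by auto
  have "eta_val q k (valS k f) x = Cq q k * (?V / ?D) * (f (iv x) / (?V / Pk k x))"
    unfolding eta_val_def valS_def Cq_def iv_def
    by (simp add: prod_dividef case_prod_beta inv_offdiag[OF generic_torus[OF g], unfolded case_prod_beta])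
  also have "\<dots> = Cq q k * Pk k x * f (iv x) / ?D" using V P by (simp add: field_simps)
  finally show ?thesis .
qed

lemma valD_iff:
  assumes q: "q \<noteq> 0" and g: "generic q k x"
  shows "valD q k h x = eta_val q k (valS k f) x \<longleftrightarrow> h x = Cq q k * Pk k x * f (iv x)"
  using generic_D[OF q g] unfolding eta_val_generic[OF q g] valD_def
  by (simp add: divide_cancel_right)



lemma torus_perm: "torus k x \<Longrightarrow> \<sigma> permutes {..<k} \<Longrightarrow> torus k (x \<circ> \<sigma>)"
  unfolding torus_def using permutes_in_image by fastforce

lemma Pk_perm: "\<sigma> permutes {..<k} \<Longrightarrow> Pk k (x \<circ> \<sigma>) = Pk k x"
  unfolding Pk_def using prod.permute[of \<sigma> "{..<k}" "\<lambda>i. x i ^ (2 * (k - 1))"] by (simp add: comp_def)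

lemma iv_comp: "iv (x \<circ> \<sigma>) = iv x \<circ> \<sigma>"
  unfolding iv_def by auto

lemma laurent_sym_from_torus:
  fixes q :: complex
  assumes q: "q \<noteq> 0" and L: "laurent_poly k g"
    and T: "\<And>x \<sigma>. torus k x \<Longrightarrow> \<sigma> permutes {..<k} \<Longrightarrow> g (x \<circ> \<sigma>) = g x"
  shows "symmetric_fn k g"
  unfolding symmetric_fn_def
proof (intro allI impI)
  fix \<sigma> :: "nat \<Rightarrow> nat" and x :: pt assume s: "\<sigma> permutes {..<k}"
  have "(\<lambda>x. g (x \<circ> \<sigma>)) = g"
    by (rule laurent_unique[OF q laurent_perm[OF L s] L]) (use T s generic_torus in blast)
  then show "g (x \<circ> \<sigma>) = g x" by (metis)
qed

lemma eta_exists: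
  assumes q: "q \<noteq> 0" and f: "f \<in> SymLaurent k"
  shows "\<exists>g\<in>SymLaurent k. \<forall>x. torus k x \<longrightarrow> g x = Cq q k * Pk k x * f (iv x)"
proof -
  obtain A c where Ac: "finite A" "\<And>x. f x = lp A c k x"
    using f unfolding SymLaurent_def laurent_lp by auto
  define N where "N = 2 * (k - 1)"
  define g where "g x = (\<Sum>\<alpha>\<in>A. (Cq q k * c \<alpha>) * (\<Prod>i<k. x i powi ((\<lambda>\<alpha> i. int N - \<alpha> i) \<alpha> i)))" for x
  have Lg: "laurent_poly k g" by (rule laurent_gen[OF Ac(1)]) (simp add: g_def)
  have Tg: "g x = Cq q k * Pk k x * f (iv x)" if "torus k x" for x
  proof -
    have "(\<Prod>i<k. x i powi (int N - \<alpha> i)) = Pk k x * (\<Prod>i<k. inverse (x i) powi \<alpha> i)" for \<alpha>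
    proof -
      have "(\<Prod>i<k. x i powi (int N - \<alpha> i)) = (\<Prod>i<k. x i ^ N * inverse (x i) powi \<alpha> i)"
      proof (rule prod.cong[OF refl])
        fix i assume "i \<in> {..<k}"
        then have "x i \<noteq> 0" using that unfolding torus_def by auto
        then show "x i powi (int N - \<alpha> i) = x i ^ N * inverse (x i) powi \<alpha> i"
          by (simp add: power_int_diff power_int_inverse divide_inverse)
      qed
      then show ?thesis unfolding Pk_def N_def by (simp add: prod.distrib)
    qed
    then show ?thesis unfolding g_def Ac(2) lp_def iv_def
      by (simp add: sum_distrib_left mult.assoc mult.left_commute)
  qed
  have Sg: "symmetric_fn k g"
  proof (rule laurent_sym_from_torus[OF q Lg])
    fix x :: pt and \<sigma> assume t: "torus k x" and s: "\<sigma> permutes {..<k}"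
    have "f (iv x \<circ> \<sigma>) = f (iv x)" using f s unfolding SymLaurent_def symmetric_fn_def by blast
    then show "g (x \<circ> \<sigma>) = g x"
      using Tg[OF t] Tg[OF torus_perm[OF t s]] Pk_perm[OF s] iv_comp by simp
  qed
  show ?thesis using Lg Sg Tg unfolding SymLaurent_def by blast
qed

lemma ex1_eta:
  assumes q: "q \<noteq> 0" and f: "f \<in> SymLaurent k"
  shows "\<exists>!g. g \<in> SymLaurent k \<and> (\<forall>x. generic q k x \<longrightarrow> valD q k g x = eta_val q k (valS k f) x)"
proof -
  obtain g where g: "g \<in> SymLaurent k" "\<And>x. torus k x \<Longrightarrow> g x = Cq q k * Pk k x * f (iv x)"
    using eta_exists[OF q f] by blast
  show ?thesis
  proof (rule ex1I[of _ g])
    show "g \<in> SymLaurent k \<and> (\<forall>x. generic q k x \<longrightarrow> valD q k g x = eta_val q k (valS k f) x)"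
      using g valD_iff[OF q] generic_torus by blast
    fix h assume h: "h \<in> SymLaurent k \<and> (\<forall>x. generic q k x \<longrightarrow> valD q k h x = eta_val q k (valS k f) x)"
    show "h = g"
    proof (rule laurent_unique[OF q])
      show "laurent_poly k h" "laurent_poly k g" using h g unfolding SymLaurent_def by auto
      fix x assume gx: "generic q k x"
      show "h x = g x" using h gx valD_iff[OF q gx] g(2)[OF generic_torus[OF gx]] by auto
    qed
  qed
qed

lemma eta_props:
  assumes q: "q \<noteq> 0" and f: "f \<in> SymLaurent k"
  shows "eta q k f \<in> SymLaurent k" "\<And>x. torus k x \<Longrightarrow> eta q k f x = Cq q k * Pk k x * f (iv x)"
proof -
  obtain g where g: "g \<in> SymLaurent k" "\<And>x. torus k x \<Longrightarrow> g x = Cq q k * Pk k x * f (iv x)"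
    using eta_exists[OF q f] by blast
  have P: "g \<in> SymLaurent k \<and> (\<forall>x. generic q k x \<longrightarrow> valD q k g x = eta_val q k (valS k f) x)"
    using g valD_iff[OF q] generic_torus by blast
  have "eta q k f = g" unfolding eta_def
    using the1_equality[OF ex1_eta[OF q f]] P by blast
  then show "eta q k f \<in> SymLaurent k" "\<And>x. torus k x \<Longrightarrow> eta q k f x = Cq q k * Pk k x * f (iv x)"
    using g by auto
qed



lemma torus_iv: "torus k x \<Longrightarrow> torus k (iv x)"
  unfolding torus_def iv_def by auto

lemma Pk_iv: "torus k x \<Longrightarrow> Pk k x * Pk k (iv x) = 1"
  unfolding Pk_def iv_def torus_def
  by (simp add: prod.distrib[symmetric] power_mult_distrib[symmetric])

lemma iv_iv: "iv (iv x) = x" unfolding iv_def by auto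

lemma Cq_nz: "q \<noteq> 0 \<Longrightarrow> Cq q k \<noteq> 0" unfolding Cq_def by simp

lemma SymL_lin:
  assumes "f \<in> SymLaurent k" "g \<in> SymLaurent k"
  shows "(\<lambda>x. a * f x + b * g x) \<in> SymLaurent k"
  using assms laurent_lin unfolding SymLaurent_def symmetric_fn_def by auto

lemma SymL_scale: "f \<in> SymLaurent k \<Longrightarrow> (\<lambda>x. a * f x) \<in> SymLaurent k"
  using SymL_lin[of f k f a 0] by simp

lemma SymL_add: "f \<in> SymLaurent k \<Longrightarrow> g \<in> SymLaurent k \<Longrightarrow> (\<lambda>x. f x + g x) \<in> SymLaurent k"
  using SymL_lin[of f k g 1 1] by simp

lemma SymL_laurent: "f \<in> SymLaurent k \<Longrightarrow> laurent_poly k f"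
  unfolding SymLaurent_def by auto

lemma eta_twice:
  assumes q: "q \<noteq> 0" and f: "f \<in> SymLaurent k"
  shows "eta q k (eta q k f) = (\<lambda>x. (Cq q k)^2 * f x)"
proof (rule laurent_unique[OF q])
  have ef: "eta q k f \<in> SymLaurent k" by (rule eta_props(1)[OF q f])
  show "laurent_poly k (eta q k (eta q k f))" by (rule SymL_laurent[OF eta_props(1)[OF q ef]])
  show "laurent_poly k (\<lambda>x. (Cq q k)^2 * f x)" by (rule laurent_scale[OF SymL_laurent[OF f]])
  fix x assume "generic q k x"
  then have t: "torus k x" by (rule generic_torus)
  have "eta q k (eta q k f) x = Cq q k * Pk k x * (Cq q k * Pk k (iv x) * f (iv (iv x)))"
    using eta_props(2)[OF q ef t] eta_props(2)[OF q f torus_iv[OF t]] by simp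
  also have "\<dots> = (Cq q k)^2 * (Pk k x * Pk k (iv x)) * f x" by (simp add: iv_iv power2_eq_square)
  finally show "eta q k (eta q k f) x = (Cq q k)^2 * f x" using Pk_iv[OF t] by simp
qed

lemma eta_lin:
  assumes q: "q \<noteq> 0" and f: "f \<in> SymLaurent k" and g: "g \<in> SymLaurent k"
  shows "eta q k (\<lambda>x. a * f x + b * g x) = (\<lambda>x. a * eta q k f x + b * eta q k g x)"
proof (rule laurent_unique[OF q])
  show "laurent_poly k (eta q k (\<lambda>x. a * f x + b * g x))"
    by (rule SymL_laurent[OF eta_props(1)[OF q SymL_lin[OF f g]]])
  show "laurent_poly k (\<lambda>x. a * eta q k f x + b * eta q k g x)"
    by (rule laurent_lin[OF SymL_laurent[OF eta_props(1)[OF q f]] SymL_laurent[OF eta_props(1)[OF q g]]])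
  fix x assume "generic q k x"
  then have t: "torus k x" by (rule generic_torus)
  show "eta q k (\<lambda>x. a * f x + b * g x) x = a * eta q k f x + b * eta q k g x"
    unfolding eta_props(2)[OF q SymL_lin[OF f g] t] eta_props(2)[OF q f t] eta_props(2)[OF q g t]
    by (simp add: algebra_simps)
qed

lemma eta_add:
  assumes q: "q \<noteq> 0" and f: "f \<in> SymLaurent k" and g: "g \<in> SymLaurent k"
  shows "eta q k (\<lambda>x. f x + g x) = (\<lambda>x. eta q k f x + eta q k g x)"
  using eta_lin[OF q f g, of 1 1] by simp

lemma eta_scale:
  assumes q: "q \<noteq> 0" and f: "f \<in> SymLaurent k"
  shows "eta q k (\<lambda>x. c * f x) = (\<lambda>x. c * eta q k f x)"
  using eta_lin[OF q f f, of c 0] by simp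

lemma eta_inj:
  assumes q: "q \<noteq> 0" and f: "f \<in> SymLaurent k" and g: "g \<in> SymLaurent k" and e: "eta q k f = eta q k g"
  shows "f = g"
proof -
  have "(\<lambda>x. (Cq q k)^2 * f x) = (\<lambda>x. (Cq q k)^2 * g x)"
    using eta_twice[OF q f] eta_twice[OF q g] e by simp
  then show ?thesis using Cq_nz[OF q] by (auto simp: fun_eq_iff)
qed

lemma eta_surj:
  assumes q: "q \<noteq> 0" and h: "h \<in> SymLaurent k"
  shows "(\<lambda>x. inverse ((Cq q k)^2) * eta q k h x) \<in> SymLaurent k"
    "eta q k (\<lambda>x. inverse ((Cq q k)^2) * eta q k h x) = h"
proof -
  have eh: "eta q k h \<in> SymLaurent k" by (rule eta_props(1)[OF q h])
  show "(\<lambda>x. inverse ((Cq q k)^2) * eta q k h x) \<in> SymLaurent k" by (rule SymL_scale[OF eh])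
  show "eta q k (\<lambda>x. inverse ((Cq q k)^2) * eta q k h x) = h"
    unfolding eta_scale[OF q eh] eta_twice[OF q h] using Cq_nz[OF q] by (simp add: fun_eq_iff)
qed

lemma eta_bij:
  assumes q: "q \<noteq> 0"
  shows "bij_betw (eta q k) (SymLaurent k) (SymLaurent k)"
  unfolding bij_betw_def
proof
  show "inj_on (eta q k) (SymLaurent k)" using eta_inj[OF q] by (auto intro: inj_onI)
  show "eta q k ` SymLaurent k = SymLaurent k"
  proof
    show "eta q k ` SymLaurent k \<subseteq> SymLaurent k" using eta_props(1)[OF q] by auto
    show "SymLaurent k \<subseteq> eta q k ` SymLaurent k"
    proof
      fix h assume "h \<in> SymLaurent k"
      then show "h \<in> eta q k ` SymLaurent k" using eta_surj[OF q] by (metis image_eqI)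
    qed
  qed
qed

lemma eta_one:
  assumes q: "q \<noteq> 0"
  shows "eta q 0 (\<lambda>_. 1) = (\<lambda>_. 1)"
proof -
  have one: "(\<lambda>_. 1) \<in> SymLaurent 0"
    unfolding SymLaurent_def laurent_poly_def symmetric_fn_def
    by (auto intro!: exI[of _ "{\<lambda>_. 0}"] exI[of _ "\<lambda>_. 1"])
  have L: "laurent_poly 0 (eta q 0 (\<lambda>_. 1))" by (rule SymL_laurent[OF eta_props(1)[OF q one]])
  show ?thesis
  proof (rule laurent_unique[OF q L])
    show "laurent_poly 0 (\<lambda>_. 1)" using one by (rule SymL_laurent)
    fix x assume "generic q 0 x"
    then show "eta q 0 (\<lambda>_. 1) x = 1"
      using eta_props(2)[OF q one generic_torus] by (simp add: Cq_def Pk_def)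
  qed
qed



lemma cross_id:
  fixes q t z w :: complex
  assumes q: "q \<noteq> 0" and z: "z \<noteq> 0" and w: "w \<noteq> 0" and d: "z \<noteq> w" "z \<noteq> q * w" "w \<noteq> q * z"
  shows "(z - w) / (z - w / q) * ((w - z) / (w - z / q)) * zeta q t (inverse z / inverse w)
       = q * zetaD q t (z / w)"
proof -
  have 1: "z - w / q \<noteq> 0" using q d by (auto simp: field_simps)
  have 2: "w - z / q \<noteq> 0" using q d by (auto simp: field_simps)
  have 3: "w / z - 1 \<noteq> 0" using z d by (auto simp: field_simps)
  have 4: "1 - z / w \<noteq> 0" using w d by (auto simp: field_simps)
  have 5: "1 - q * (z / w) \<noteq> 0" using w d by (auto simp: field_simps)
  have e: "inverse z / inverse w = w / z" using z w by (simp add: field_simps)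
  have A: "(z - w) / (z - w / q) * ((w - z) / (w - z / q)) = (-1) * (z - w)^2 * q^2 / ((q * z - w) * (q * w - z))"
    using q 1 2 by (simp add: field_simps power2_eq_square)
  have B0: "w / z - 1 / q = (w - z / q) / z" "w / z - t = (w - t * z) / z" "w / z - q / t = (w - q / t * z) / z"
     "w / z - 1 = (w - z) / z" using z by (auto simp: field_simps)
  have wz: "w - z \<noteq> 0" "q * z - w \<noteq> 0" "q * w - z \<noteq> 0" "w - q * z \<noteq> 0" using d by auto
  have B: "zeta q t (w / z) = (w - z / q) * (w - t * z) * (w - q / t * z) / (w - z)^3"
    unfolding zeta_def B0 using z wz by (simp add: power_divide power3_eq_cube)
  have C0: "1 - t * (z / w) = (w - t * z) / w" "1 - q / t * (z / w) = (w - q / t * z) / w"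
    "1 - z / w = (w - z) / w" "1 - q * (z / w) = (w - q * z) / w" using w by (auto simp: field_simps)
  have C: "zetaD q t (z / w) = (w - t * z) * (w - q / t * z) / ((w - z) * (w - q * z))"
    unfolding zetaD_def C0 using w by simp
  have G: "(-1) * (z - w)^2 * q^2 / ((q * z - w) * (q * w - z)) * ((w - z / q) * a * b / (w - z)^3)
     = q * (a * b / ((w - z) * (w - q * z)))" for a b
  proof -
    have H: "(-1) * d^2 * q^2 / ((- e) * f) * (f / q * a * b / d^3) = q * (a * b / (d * e))"
      if "d \<noteq> 0" "e \<noteq> 0" "f \<noteq> 0" for d e f :: complex
      using that q by (simp add: field_simps power2_eq_square power3_eq_cube)
    have "w - z / q = (q * w - z) / q" using q by (simp add: field_simps)
    moreover have "(z - w)^2 = (w - z)^2" by (simp add: power2_commute)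
    moreover have "q * z - w = - (w - q * z)" by simp
    ultimately show ?thesis using H[of "w - z" "w - q * z" "q * w - z"] wz by simp
  qed
  show ?thesis unfolding e A B C using G[of "w - t * z" "w - q / t * z"] by (simp add: mult.assoc)
qed



lemma offdiag_split:
  "(\<Prod>(r,s)\<in>offdiag (k+l). h r s) =
     (\<Prod>(r,s)\<in>offdiag k. h r s) * (\<Prod>(r,s)\<in>offdiag l. h (k+r) (k+s)) *
     (\<Prod>(r,s)\<in>{..<k} \<times> {k..<k+l}. (h r s * h s r :: complex))"
proof -
  let ?S1 = "offdiag k" and ?S2 = "(\<lambda>(r,s). (k+r, k+s)) ` offdiag l"
  let ?S3 = "{..<k} \<times> {k..<k+l}" and ?S4 = "(\<lambda>(r,s). (s,r)) ` ({..<k} \<times> {k..<k+l})"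
  have U: "offdiag (k+l) = ?S1 \<union> ?S2 \<union> ?S3 \<union> ?S4"
  proof (rule set_eqI, rule iffI)
    fix p assume "p \<in> offdiag (k+l)"
    then obtain r s where p: "p = (r,s)" "r < k+l" "s < k+l" "r \<noteq> s" unfolding offdiag_def by auto
    show "p \<in> ?S1 \<union> ?S2 \<union> ?S3 \<union> ?S4"
    proof (cases "r < k"; cases "s < k")
      assume "\<not> r < k" "\<not> s < k"
      then have "(r - k, s - k) \<in> offdiag l" using p unfolding offdiag_def by auto
      moreover have "p = (k + (r-k), k + (s-k))" using p \<open>\<not> r < k\<close> \<open>\<not> s < k\<close> by auto
      ultimately have "p \<in> ?S2" by (auto intro: image_eqI)
      then show ?thesis by blast
    next
      assume "\<not> r < k" "s < k"
      then have "(s, r) \<in> ?S3" using p by auto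
      then have "p \<in> ?S4" using p by (auto intro: image_eqI[of _ _ "(s,r)"])
      then show ?thesis by blast
    qed (use p in \<open>auto simp: offdiag_def\<close>)
  next
    fix p assume "p \<in> ?S1 \<union> ?S2 \<union> ?S3 \<union> ?S4"
    then show "p \<in> offdiag (k+l)" unfolding offdiag_def by auto
  qed
  have fin: "finite ?S1" "finite ?S2" "finite ?S3" "finite ?S4" by auto
  have "(\<Prod>p\<in>offdiag (k+l). case p of (r,s) \<Rightarrow> h r s) =
        (\<Prod>p\<in>?S1. case p of (r,s) \<Rightarrow> h r s) * (\<Prod>p\<in>?S2. case p of (r,s) \<Rightarrow> h r s) *
        (\<Prod>p\<in>?S3. case p of (r,s) \<Rightarrow> h r s) * (\<Prod>p\<in>?S4. case p of (r,s) \<Rightarrow> h r s)"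
    unfolding U
  proof -
    let ?g = "\<lambda>p. case p of (r,s) \<Rightarrow> h r s"
    have d1: "?S1 \<inter> ?S2 = {}" "(?S1 \<union> ?S2) \<inter> ?S3 = {}" "(?S1 \<union> ?S2 \<union> ?S3) \<inter> ?S4 = {}"
      unfolding offdiag_def by auto
    have "prod ?g (?S1 \<union> ?S2 \<union> ?S3 \<union> ?S4) = prod ?g (?S1 \<union> ?S2 \<union> ?S3) * prod ?g ?S4"
      by (rule prod.union_disjoint) (use fin d1 in auto)
    also have "prod ?g (?S1 \<union> ?S2 \<union> ?S3) = prod ?g (?S1 \<union> ?S2) * prod ?g ?S3"
      by (rule prod.union_disjoint) (use fin d1 in auto)
    also have "prod ?g (?S1 \<union> ?S2) = prod ?g ?S1 * prod ?g ?S2"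
      by (rule prod.union_disjoint) (use fin d1 in auto)
    finally show "prod ?g (?S1 \<union> ?S2 \<union> ?S3 \<union> ?S4) = prod ?g ?S1 * prod ?g ?S2 * prod ?g ?S3 * prod ?g ?S4" .
  qed
  also have "(\<Prod>p\<in>?S2. case p of (r,s) \<Rightarrow> h r s) = (\<Prod>(r,s)\<in>offdiag l. h (k+r) (k+s))"
    by (subst prod.reindex) (auto simp: inj_on_def case_prod_beta)
  also have "(\<Prod>p\<in>?S4. case p of (r,s) \<Rightarrow> h r s) = (\<Prod>(r,s)\<in>?S3. h s r)"
    by (subst prod.reindex) (auto simp: inj_on_def case_prod_beta)
  finally show ?thesis by (simp add: prod.distrib case_prod_beta mult.assoc)
qed

lemma offdiag_perm:
  assumes s: "\<sigma> permutes {..<n}"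
  shows "(\<Prod>(r,s)\<in>offdiag n. h (\<sigma> r) (\<sigma> s)) = (\<Prod>(r,s)\<in>offdiag n. (h r s :: complex))"
proof (rule prod.reindex_bij_witness[where i = "\<lambda>(r,s). (inv \<sigma> r, inv \<sigma> s)" and j = "\<lambda>(r,s). (\<sigma> r, \<sigma> s)"])
  note p = permutes_inverses[OF s] permutes_in_image[OF s] permutes_in_image[OF permutes_inv[OF s]]
  have inj: "\<sigma> a = \<sigma> b \<longleftrightarrow> a = b" for a b using permutes_inj[OF s] by (auto dest: injD)
  have injv: "inv \<sigma> a = inv \<sigma> b \<longleftrightarrow> a = b" for a b using permutes_inj[OF permutes_inv[OF s]] by (auto dest: injD)
  fix a assume a: "a \<in> offdiag n"
  then show "(case (case a of (r, s) \<Rightarrow> (\<sigma> r, \<sigma> s)) of (r, s) \<Rightarrow> (inv \<sigma> r, inv \<sigma> s)) = a"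
    using p by (auto simp: case_prod_beta)
  show "(case a of (r, s) \<Rightarrow> (\<sigma> r, \<sigma> s)) \<in> offdiag n" using a p inj unfolding offdiag_def by auto
  show "(case case a of (r, s) \<Rightarrow> (\<sigma> r, \<sigma> s) of (r, s) \<Rightarrow> h r s) = (case a of (r, s) \<Rightarrow> h (\<sigma> r) (\<sigma> s))"
    by (simp add: case_prod_beta)
next
  note p = permutes_inverses[OF s] permutes_in_image[OF s] permutes_in_image[OF permutes_inv[OF s]]
  have injv: "inv \<sigma> a = inv \<sigma> b \<longleftrightarrow> a = b" for a b using permutes_inj[OF permutes_inv[OF s]] by (auto dest: injD)
  fix b assume b: "b \<in> offdiag n"
  then show "(case (case b of (r, s) \<Rightarrow> (inv \<sigma> r, inv \<sigma> s)) of (r, s) \<Rightarrow> (\<sigma> r, \<sigma> s)) = b"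
    using p by (auto simp: case_prod_beta)
  show "(case b of (r, s) \<Rightarrow> (inv \<sigma> r, inv \<sigma> s)) \<in> offdiag n" using b p injv unfolding offdiag_def by auto
qed

lemma even_pred_mult: "even (k * (k - 1 :: nat))"
  by (cases k) auto

lemma exp_split: "(k + l) * (k + l - 1) div 2 = k * (k - 1) div 2 + l * (l - 1) div 2 + k * (l::nat)"
proof -
  have "(k + l) * (k + l - 1) = k * (k - 1) + l * (l - 1) + 2 * k * l"
    by (cases k; cases l) (auto simp: algebra_simps)
  then show ?thesis using even_pred_mult[of k] even_pred_mult[of l] by auto
qed

lemma Cq_split: "q \<noteq> 0 \<Longrightarrow> Cq q (k + l) * q ^ (k * l) = Cq q k * Cq q l"
  unfolding Cq_def exp_split by (simp add: power_add field_simps)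



lemma eta_valD:
  assumes q: "q \<noteq> 0" and f: "f \<in> SymLaurent k" and g: "generic q k y"
  shows "valD q k (eta q k f) y = eta_val q k (valS k f) y"
  using theI'[OF ex1_eta[OF q f]] g unfolding eta_def[symmetric] by blast

definition Pr :: "complex \<Rightarrow> nat \<Rightarrow> pt \<Rightarrow> complex" where
  "Pr q n y = (\<Prod>(r,s)\<in>offdiag n. (y r - y s) / (y r - y s / q))"

lemma generic_sub1:
  assumes g: "generic q (k+l) x" and s: "\<sigma> permutes {..<k+l}"
  shows "generic q k (\<lambda>i. x (\<sigma> i))"
proof -
  have inj: "\<sigma> a = \<sigma> b \<longleftrightarrow> a = b" for a b using permutes_inj[OF s] by (auto dest: injD)
  have im: "i < k + l \<Longrightarrow> \<sigma> i < k + l" for i using permutes_in_image[OF s] by auto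
  show ?thesis using g im inj unfolding generic_def torus_def offdiag_def by auto
qed

lemma generic_sub2:
  assumes g: "generic q (k+l) x" and s: "\<sigma> permutes {..<k+l}"
  shows "generic q l (\<lambda>i. x (\<sigma> (k + i)))"
proof -
  have inj: "\<sigma> a = \<sigma> b \<longleftrightarrow> a = b" for a b using permutes_inj[OF s] by (auto dest: injD)
  have im: "i < k + l \<Longrightarrow> \<sigma> i < k + l" for i using permutes_in_image[OF s] by auto
  show ?thesis using g im inj unfolding generic_def torus_def offdiag_def by auto
qed

lemma term_id:
  fixes q t :: complex
  assumes q: "q \<noteq> 0" and g: "generic q (k+l) x" and s: "\<sigma> permutes {..<k+l}"
  shows "Cq q (k+l) * Pr q (k+l) x *
          (\<Prod>r<k. \<Prod>r'\<in>{k..<k+l}. zeta q t (inverse (x (\<sigma> r)) / inverse (x (\<sigma> r'))))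
       = (Cq q k * Pr q k (\<lambda>i. x (\<sigma> i))) * (Cq q l * Pr q l (\<lambda>i. x (\<sigma> (k + i)))) *
          (\<Prod>r<k. \<Prod>r'\<in>{k..<k+l}. zetaD q t (x (\<sigma> r) / x (\<sigma> r')))"
proof -
  let ?X = "{..<k} \<times> {k..<k+l}"
  let ?cr = "\<lambda>z w. (z - w) / (z - w / q) * ((w - z) / (w - z / q))"
  have inj: "\<sigma> a = \<sigma> b \<longleftrightarrow> a = b" for a b using permutes_inj[OF s] by (auto dest: injD)
  have im: "i < k + l \<Longrightarrow> \<sigma> i < k + l" for i using permutes_in_image[OF s] by auto
  have "Pr q (k+l) x = (\<Prod>(r,s)\<in>offdiag (k+l). (x (\<sigma> r) - x (\<sigma> s)) / (x (\<sigma> r) - x (\<sigma> s) / q))"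
    unfolding Pr_def using offdiag_perm[OF s, of "\<lambda>a b. (x a - x b) / (x a - x b / q)"] by simp
  also have "\<dots> = Pr q k (\<lambda>i. x (\<sigma> i)) * Pr q l (\<lambda>i. x (\<sigma> (k + i))) *
       (\<Prod>(r,s)\<in>?X. ?cr (x (\<sigma> r)) (x (\<sigma> s)))"
    unfolding Pr_def by (rule offdiag_split)
  finally have P: "Pr q (k+l) x = Pr q k (\<lambda>i. x (\<sigma> i)) * Pr q l (\<lambda>i. x (\<sigma> (k + i))) *
       (\<Prod>(r,s)\<in>?X. ?cr (x (\<sigma> r)) (x (\<sigma> s)))" .
  have Z1: "(\<Prod>r<k. \<Prod>r'\<in>{k..<k+l}. zeta q t (inverse (x (\<sigma> r)) / inverse (x (\<sigma> r'))))
      = (\<Prod>(r,s)\<in>?X. zeta q t (inverse (x (\<sigma> r)) / inverse (x (\<sigma> s))))"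
    by (rule prod.cartesian_product)
  have Z2: "(\<Prod>r<k. \<Prod>r'\<in>{k..<k+l}. zetaD q t (x (\<sigma> r) / x (\<sigma> r')))
      = (\<Prod>(r,s)\<in>?X. zetaD q t (x (\<sigma> r) / x (\<sigma> s)))"
    by (rule prod.cartesian_product)
  have C: "(\<Prod>(r,s)\<in>?X. ?cr (x (\<sigma> r)) (x (\<sigma> s))) * (\<Prod>(r,s)\<in>?X. zeta q t (inverse (x (\<sigma> r)) / inverse (x (\<sigma> s))))
      = q ^ (k * l) * (\<Prod>(r,s)\<in>?X. zetaD q t (x (\<sigma> r) / x (\<sigma> s)))"
  proof -
    have "(\<Prod>(r,s)\<in>?X. ?cr (x (\<sigma> r)) (x (\<sigma> s))) * (\<Prod>(r,s)\<in>?X. zeta q t (inverse (x (\<sigma> r)) / inverse (x (\<sigma> s))))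
       = (\<Prod>(r,s)\<in>?X. ?cr (x (\<sigma> r)) (x (\<sigma> s)) * zeta q t (inverse (x (\<sigma> r)) / inverse (x (\<sigma> s))))"
      by (subst prod.distrib[symmetric]) (rule prod.cong, auto)
    also have "\<dots> = (\<Prod>(r,s)\<in>?X. q * zetaD q t (x (\<sigma> r) / x (\<sigma> s)))"
    proof (rule prod.cong[OF refl])
      fix p assume "p \<in> ?X"
      then obtain r s where p: "p = (r,s)" and rs: "r \<in> {..<k}" "s \<in> {k..<k+l}" by auto
      then have o1: "(\<sigma> r, \<sigma> s) \<in> offdiag (k+l)" and o2: "(\<sigma> s, \<sigma> r) \<in> offdiag (k+l)"
        using im inj unfolding offdiag_def by auto
      have t1: "x (\<sigma> r) \<noteq> 0" "x (\<sigma> s) \<noteq> 0" using g im rs unfolding generic_def torus_def by auto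
      have "?cr (x (\<sigma> r)) (x (\<sigma> s)) * zeta q t (inverse (x (\<sigma> r)) / inverse (x (\<sigma> s))) =
            q * zetaD q t (x (\<sigma> r) / x (\<sigma> s))"
        by (rule cross_id[OF q t1]) (use g o1 o2 in \<open>auto simp: generic_def\<close>)
      then show "(case p of (r,s) \<Rightarrow> ?cr (x (\<sigma> r)) (x (\<sigma> s)) * zeta q t (inverse (x (\<sigma> r)) / inverse (x (\<sigma> s)))) =
            (case p of (r,s) \<Rightarrow> q * zetaD q t (x (\<sigma> r) / x (\<sigma> s)))" unfolding p by simp
    qed
    also have "\<dots> = q ^ (k * l) * (\<Prod>(r,s)\<in>?X. zetaD q t (x (\<sigma> r) / x (\<sigma> s)))"
      by (simp add: prod.distrib case_prod_beta)
    finally show ?thesis .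
  qed
  let ?a = "Pr q k (\<lambda>i. x (\<sigma> i))" and ?b = "Pr q l (\<lambda>i. x (\<sigma> (k + i)))"
  let ?CR = "\<Prod>(r,s)\<in>?X. ?cr (x (\<sigma> r)) (x (\<sigma> s))"
  let ?W1 = "\<Prod>(r,s)\<in>?X. zeta q t (inverse (x (\<sigma> r)) / inverse (x (\<sigma> s)))"
  let ?W2 = "\<Prod>(r,s)\<in>?X. zetaD q t (x (\<sigma> r) / x (\<sigma> s))"
  have "Cq q (k+l) * (?a * ?b * ?CR) * ?W1 = Cq q (k+l) * ?a * ?b * (?CR * ?W1)" by (simp only: mult_ac)
  also have "\<dots> = Cq q (k+l) * ?a * ?b * (q ^ (k * l) * ?W2)" by (simp only: C)
  also have "\<dots> = (Cq q (k+l) * q ^ (k * l)) * (?a * ?b * ?W2)" by (simp only: mult_ac)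
  also have "\<dots> = (Cq q k * Cq q l) * (?a * ?b * ?W2)" by (simp only: Cq_split[OF q])
  also have "\<dots> = (Cq q k * ?a) * (Cq q l * ?b) * ?W2" by (simp only: mult_ac)
  finally show ?thesis unfolding P Z1 Z2 .
qed



lemma eta_val_unf: "eta_val q n P y = Cq q n * Pr q n y * P (\<lambda>i. inverse (y i))"
  unfolding eta_val_def Cq_def Pr_def by simp

lemma shuffle_ok:
  fixes q t :: complex
  assumes q: "q \<noteq> 0" and f: "f \<in> SymLaurent k" and g: "g \<in> SymLaurent l" and x: "generic q (k + l) x"
  shows "eta_val q (k + l) (shuffle_val (zeta q t) k l (valS k f) (valS l g)) x
       = shuffle_val (zetaD q t) k l (valD q k (eta q k f)) (valD q l (eta q l g)) x"
proof -
  let ?c = "1 / (fact k * fact l) :: complex"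
  let ?P = "{\<sigma>. \<sigma> permutes {..<k+l}}"
  let ?A = "\<lambda>\<sigma>. valS k f (\<lambda>i. inverse (x (\<sigma> i)))"
  let ?B = "\<lambda>\<sigma>. valS l g (\<lambda>i. inverse (x (\<sigma> (k + i))))"
  let ?Z1 = "\<lambda>\<sigma>. (\<Prod>r<k. \<Prod>r'\<in>{k..<k+l}. zeta q t (inverse (x (\<sigma> r)) / inverse (x (\<sigma> r'))))"
  let ?Z2 = "\<lambda>\<sigma>. (\<Prod>r<k. \<Prod>r'\<in>{k..<k+l}. zetaD q t (x (\<sigma> r) / x (\<sigma> r')))"
  have L: "eta_val q (k + l) (shuffle_val (zeta q t) k l (valS k f) (valS l g)) x
     = ?c * (\<Sum>\<sigma>\<in>?P. Cq q (k+l) * Pr q (k+l) x * (?A \<sigma> * ?B \<sigma> * ?Z1 \<sigma>))"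
    unfolding eta_val_unf shuffle_val_def by (simp add: sum_distrib_left mult.assoc mult.left_commute)
  have R: "shuffle_val (zetaD q t) k l (valD q k (eta q k f)) (valD q l (eta q l g)) x
     = ?c * (\<Sum>\<sigma>\<in>?P. (Cq q k * Pr q k (\<lambda>i. x (\<sigma> i)) * ?A \<sigma>) *
                     (Cq q l * Pr q l (\<lambda>i. x (\<sigma> (k + i))) * ?B \<sigma>) * ?Z2 \<sigma>)"
    unfolding shuffle_val_def
  proof (intro arg_cong[where f = "\<lambda>s. ?c * s"] sum.cong refl)
    fix \<sigma> assume "\<sigma> \<in> ?P"
    then have s: "\<sigma> permutes {..<k+l}" by simp
    show "valD q k (eta q k f) (\<lambda>i. x (\<sigma> i)) * valD q l (eta q l g) (\<lambda>i. x (\<sigma> (k + i))) * ?Z2 \<sigma> =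
        (Cq q k * Pr q k (\<lambda>i. x (\<sigma> i)) * ?A \<sigma>) * (Cq q l * Pr q l (\<lambda>i. x (\<sigma> (k + i))) * ?B \<sigma>) * ?Z2 \<sigma>"
      unfolding eta_valD[OF q f generic_sub1[OF x s]] eta_valD[OF q g generic_sub2[OF x s]] eta_val_unf
      by simp
  qed
  have T: "Cq q (k+l) * Pr q (k+l) x * (?A \<sigma> * ?B \<sigma> * ?Z1 \<sigma>) =
      (Cq q k * Pr q k (\<lambda>i. x (\<sigma> i)) * ?A \<sigma>) * (Cq q l * Pr q l (\<lambda>i. x (\<sigma> (k + i))) * ?B \<sigma>) * ?Z2 \<sigma>"
    if "\<sigma> \<in> ?P" for \<sigma>
  proof -
    have s: "\<sigma> permutes {..<k+l}" using that by simp
    have e: "Cq q (k+l) * Pr q (k+l) x * ?Z1 \<sigma> = (Cq q k * Pr q k (\<lambda>i. x (\<sigma> i))) * (Cq q l * Pr q l (\<lambda>i. x (\<sigma> (k + i)))) * ?Z2 \<sigma>"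
      by (rule term_id[OF q x s])
    show ?thesis using e by (simp add: algebra_simps)
  qed
  show ?thesis unfolding L R by (rule arg_cong[where f = "\<lambda>s. ?c * s"], rule sum.cong[OF refl], rule T)
qed



lemma wheel_distinct:
  fixes q t :: complex
  assumes n: "q \<noteq> 1" "1/t \<noteq> 1" "t/q \<noteq> 1" and w: "wheel q t y" and z: "y 0 \<noteq> 0" "y 1 \<noteq> 0" "y 2 \<noteq> 0"
  shows "y 0 \<noteq> y 1" "y 1 \<noteq> y 2" "y 2 \<noteq> y 0"
proof -
  have m: "y 0 / y 1 \<in> {q, 1/t, t/q}" "y 1 / y 2 \<in> {q, 1/t, t/q}" "y 2 / y 0 \<in> {q, 1/t, t/q}"
    using w unfolding wheel_def by (metis insertCI)+
  show "y 0 \<noteq> y 1" using m(1) n z by auto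
  show "y 1 \<noteq> y 2" using m(2) n z by auto
  show "y 2 \<noteq> y 0" using m(3) n z by auto
qed

lemma ev_ne:
  fixes a b :: complex
  assumes "a \<noteq> 0 \<or> b \<noteq> 0"
  shows "\<forall>\<^sub>F \<epsilon> in at 0. a * \<epsilon> + b \<noteq> 0"
proof (cases "b = 0")
  case True
  then have a: "a \<noteq> 0" using assms by auto
  show ?thesis unfolding eventually_at using True a by (intro exI[of _ 1]) auto
next
  case False
  have "((\<lambda>\<epsilon>. a * \<epsilon> + b) \<longlongrightarrow> a * 0 + b) (at 0)" by (intro tendsto_intros)
  then show ?thesis using False by (intro tendsto_imp_eventually_ne) auto
qed

lemma wheel_dense:
  fixes q t :: complex
  assumes n: "q \<noteq> 1" "1/t \<noteq> 1" "t/q \<noteq> 1" and f: "f \<in> S_wheel q t k" and k: "3 \<le> k"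
    and ty: "torus k y" and wy: "wheel q t y"
  shows "f y = 0"
proof -
  have fS: "f \<in> SymLaurent k" and fW: "\<And>x. torus k x \<Longrightarrow> wheel q t x \<Longrightarrow> (\<Prod>(r,s)\<in>offdiag k. (x r - x s)) \<noteq> 0 \<Longrightarrow> valS k f x = 0"
    using f k unfolding S_wheel_def by auto
  obtain A c where Ac: "finite A" "\<And>x. f x = lp A c k x"
    using fS unfolding SymLaurent_def laurent_lp by auto
  define cc :: "nat \<Rightarrow> complex" where "cc i = (if i < 3 then 0 else of_nat i)" for i
  define Y where "Y \<epsilon> = (\<lambda>i. cc i * \<epsilon> + y i)" for \<epsilon>
  have Y0: "Y 0 = y" unfolding Y_def by auto
  have wY: "wheel q t (Y \<epsilon>)" for \<epsilon> using wy unfolding wheel_def Y_def cc_def by simp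
  have yz: "y i \<noteq> 0" if "i < k" for i using ty that unfolding torus_def by auto
  have d3: "y 0 \<noteq> y 1" "y 1 \<noteq> y 2" "y 2 \<noteq> y 0"
    using wheel_distinct[OF n wy yz yz yz] k by auto
  have dist: "y r \<noteq> y s" if "r < 3" "s < 3" "r \<noteq> s" for r s
  proof -
    have "r = 0 \<or> r = 1 \<or> r = 2" "s = 0 \<or> s = 1 \<or> s = 2" using that by auto
    then show ?thesis using d3 that by auto
  qed
  have ev1: "\<forall>\<^sub>F \<epsilon> in at 0. \<forall>i\<in>{..<k}. Y \<epsilon> i \<noteq> 0"
    by (rule eventually_ball_finite) (auto simp: Y_def intro!: ev_ne yz)
  have ev2: "\<forall>\<^sub>F \<epsilon> in at 0. \<forall>p\<in>offdiag k. Y \<epsilon> (fst p) \<noteq> Y \<epsilon> (snd p)"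
  proof (rule eventually_ball_finite[OF finite_offdiag], rule ballI)
    fix p assume "p \<in> offdiag k"
    then obtain r s where p: "p = (r,s)" "r \<noteq> s" "r < k" "s < k" unfolding offdiag_def by auto
    have "cc r - cc s \<noteq> 0 \<or> y r - y s \<noteq> 0"
      using dist[of r s] p unfolding cc_def by auto
    then have "\<forall>\<^sub>F \<epsilon> in at 0. (cc r - cc s) * \<epsilon> + (y r - y s) \<noteq> 0" by (rule ev_ne)
    then show "\<forall>\<^sub>F \<epsilon> in at 0. Y \<epsilon> (fst p) \<noteq> Y \<epsilon> (snd p)"
      by (rule eventually_mono) (auto simp: p Y_def algebra_simps)
  qed
  have ev: "\<forall>\<^sub>F \<epsilon> in at 0. f (Y \<epsilon>) = 0"
    using ev1 ev2
  proof eventually_elim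
    case (elim \<epsilon>)
    have t: "torus k (Y \<epsilon>)" using elim(1) unfolding torus_def by auto
    have V: "(\<Prod>(r,s)\<in>offdiag k. (Y \<epsilon> r - Y \<epsilon> s)) \<noteq> 0" using elim(2) by (auto simp: prod_zero_iff)
    have "valS k f (Y \<epsilon>) = 0" by (rule fW[OF t wY V])
    then show ?case using V unfolding valS_def by simp
  qed
  have lim: "((\<lambda>\<epsilon>. f (Y \<epsilon>)) \<longlongrightarrow> f y) (at 0)"
    unfolding Ac(2) lp_def
  proof (intro tendsto_sum tendsto_mult tendsto_const tendsto_prod)
    fix \<alpha> i assume "i \<in> {..<k}"
    then have "y i \<noteq> 0" using yz by auto
    moreover have "((\<lambda>\<epsilon>. Y \<epsilon> i) \<longlongrightarrow> y i) (at 0)"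
    proof -
      have "((\<lambda>\<epsilon>. cc i * \<epsilon> + y i) \<longlongrightarrow> cc i * 0 + y i) (at 0)" by (intro tendsto_intros)
      then show ?thesis unfolding Y_def by simp
    qed
    ultimately show "((\<lambda>\<epsilon>. Y \<epsilon> i powi \<alpha> i) \<longlongrightarrow> y i powi \<alpha> i) (at 0)"
      by (intro tendsto_power_int)
  qed
  have lim0: "((\<lambda>\<epsilon>. f (Y \<epsilon>)) \<longlongrightarrow> 0) (at 0)"
    by (rule tendsto_eventually[OF ev])
  show ?thesis using tendsto_unique[OF at_neq_bot lim lim0] .
qed



definition tw :: "nat \<Rightarrow> nat" where "tw = Transposition.transpose 0 1"

lemma tw_permutes: "3 \<le> k \<Longrightarrow> tw permutes {..<k}"
  unfolding tw_def by (rule permutes_swap_id) auto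

lemma wheel_swap: "wheel q t x \<Longrightarrow> wheel q t (iv x \<circ> tw)"
proof -
  assume w: "wheel q t x"
  have "inverse (x 1) / inverse (x 0) = x 0 / x 1" "inverse (x 0) / inverse (x 2) = x 2 / x 0"
       "inverse (x 2) / inverse (x 1) = x 1 / x 2" by (simp_all add: divide_inverse mult.commute)
  then have "{(iv x \<circ> tw) 0 / (iv x \<circ> tw) 1, (iv x \<circ> tw) 1 / (iv x \<circ> tw) 2, (iv x \<circ> tw) 2 / (iv x \<circ> tw) 0}
      = {x 0 / x 1, x 1 / x 2, x 2 / x 0}"
    unfolding iv_def tw_def by (auto simp: transpose_def)
  then show ?thesis using w unfolding wheel_def by simp
qed

lemma sym_app: "f \<in> SymLaurent k \<Longrightarrow> \<sigma> permutes {..<k} \<Longrightarrow> f (x \<circ> \<sigma>) = f x"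
  unfolding SymLaurent_def symmetric_fn_def by blast

lemma eta_wheel_into:
  fixes q t :: complex
  assumes q: "q \<noteq> 0" and n: "q \<noteq> 1" "1/t \<noteq> 1" "t/q \<noteq> 1" and f: "f \<in> S_wheel q t k"
  shows "eta q k f \<in> DFK_wheel q t k"
proof -
  have fS: "f \<in> SymLaurent k" using f unfolding S_wheel_def by auto
  show ?thesis unfolding DFK_wheel_def
  proof (intro CollectI conjI impI allI)
    show "eta q k f \<in> SymLaurent k" by (rule eta_props(1)[OF q fS])
    fix x assume k: "3 \<le> k" and tx: "torus k x \<and> wheel q t x"
    have "f (iv x) = f (iv x \<circ> tw)" using sym_app[OF fS tw_permutes[OF k]] by simp
    also have "\<dots> = 0"
      by (rule wheel_dense[OF n f k]) (use tx torus_perm[OF torus_iv tw_permutes[OF k]] wheel_swap in auto)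
    finally show "eta q k f x = 0" using eta_props(2)[OF q fS] tx by simp
  qed
qed

lemma eta_wheel_onto:
  fixes q t :: complex
  assumes q: "q \<noteq> 0" and h: "h \<in> DFK_wheel q t k"
  shows "(\<lambda>x. inverse ((Cq q k)^2) * eta q k h x) \<in> S_wheel q t k"
proof -
  have hS: "h \<in> SymLaurent k" using h unfolding DFK_wheel_def by auto
  show ?thesis unfolding S_wheel_def
  proof (intro CollectI conjI impI allI)
    show "(\<lambda>x. inverse ((Cq q k)^2) * eta q k h x) \<in> SymLaurent k" by (rule eta_surj(1)[OF q hS])
    fix x assume k: "3 \<le> k" and tx: "torus k x \<and> wheel q t x \<and> (\<Prod>(r,s)\<in>offdiag k. (x r - x s)) \<noteq> 0"
    have "h (iv x) = h (iv x \<circ> tw)" using sym_app[OF hS tw_permutes[OF k]] by simp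
    also have "\<dots> = 0"
      using h k tx torus_perm[OF torus_iv tw_permutes[OF k]] wheel_swap unfolding DFK_wheel_def by blast
    finally show "valS k (\<lambda>x. inverse ((Cq q k)^2) * eta q k h x) x = 0"
      using eta_props(2)[OF q hS] tx unfolding valS_def by simp
  qed
qed

lemma eta_wheel_bij:
  fixes q t :: complex
  assumes q: "q \<noteq> 0" and n: "q \<noteq> 1" "1/t \<noteq> 1" "t/q \<noteq> 1"
  shows "bij_betw (eta q k) (S_wheel q t k) (DFK_wheel q t k)"
  unfolding bij_betw_def
proof
  have sub: "S_wheel q t k \<subseteq> SymLaurent k" unfolding S_wheel_def by auto
  show "inj_on (eta q k) (S_wheel q t k)"
    using inj_on_subset[OF bij_betw_imp_inj_on[OF eta_bij[OF q]] sub] .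
  show "eta q k ` S_wheel q t k = DFK_wheel q t k"
  proof
    show "eta q k ` S_wheel q t k \<subseteq> DFK_wheel q t k" using eta_wheel_into[OF q n] by auto
    show "DFK_wheel q t k \<subseteq> eta q k ` S_wheel q t k"
    proof
      fix h assume h: "h \<in> DFK_wheel q t k"
      then have hS: "h \<in> SymLaurent k" unfolding DFK_wheel_def by auto
      show "h \<in> eta q k ` S_wheel q t k"
        using eta_surj(2)[OF q hS] eta_wheel_onto[OF q h] by (metis image_eqI)
    qed
  qed
qed


theorem lemma7p5:
  fixes q t :: complex
  assumes "q \<noteq> 0" and "t \<noteq> 0"
    and "\<forall>n>0. q ^ n \<noteq> 1" and "\<forall>n>0. (1/t) ^ n \<noteq> 1" and "\<forall>n>0. (t/q) ^ n \<noteq> 1"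
  shows
    "(\<forall>k. \<forall>f\<in>SymLaurent k. \<exists>!g. g \<in> SymLaurent k \<and>
        (\<forall>x. generic q k x \<longrightarrow> valD q k g x = eta_val q k (valS k f) x))
   \<and> (\<forall>k. bij_betw (eta q k) (SymLaurent k) (SymLaurent k))
   \<and> (\<forall>k f g. f \<in> SymLaurent k \<longrightarrow> g \<in> SymLaurent k \<longrightarrow>
        eta q k (\<lambda>x. f x + g x) = (\<lambda>x. eta q k f x + eta q k g x))
   \<and> (\<forall>k c f. f \<in> SymLaurent k \<longrightarrow> eta q k (\<lambda>x. c * f x) = (\<lambda>x. c * eta q k f x))
   \<and> eta q 0 (\<lambda>_. 1) = (\<lambda>_. 1)
   \<and> (\<forall>k l f g. f \<in> SymLaurent k \<longrightarrow> g \<in> SymLaurent l \<longrightarrow>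
        (\<forall>x. generic q (k + l) x \<longrightarrow>
           eta_val q (k + l) (shuffle_val (zeta q t) k l (valS k f) (valS l g)) x
           = shuffle_val (zetaD q t) k l (valD q k (eta q k f)) (valD q l (eta q l g)) x))
   \<and> (\<forall>k. bij_betw (eta q k) (S_wheel q t k) (DFK_wheel q t k))"
proof -
  have q: "q \<noteq> 0" by fact
  have n: "q \<noteq> 1" "1/t \<noteq> 1" "t/q \<noteq> 1"
    using assms(3)[rule_format, of 1] assms(4)[rule_format, of 1] assms(5)[rule_format, of 1] by auto
  show ?thesis
  proof (intro conjI allI impI ballI)
    show "\<And>k f. f \<in> SymLaurent k \<Longrightarrow> \<exists>!g. g \<in> SymLaurent k \<and>
        (\<forall>x. generic q k x \<longrightarrow> valD q k g x = eta_val q k (valS k f) x)"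
      by (rule ex1_eta[OF q])
    show "\<And>k. bij_betw (eta q k) (SymLaurent k) (SymLaurent k)" by (rule eta_bij[OF q])
    show "\<And>k f g. f \<in> SymLaurent k \<Longrightarrow> g \<in> SymLaurent k \<Longrightarrow>
        eta q k (\<lambda>x. f x + g x) = (\<lambda>x. eta q k f x + eta q k g x)" by (rule eta_add[OF q])
    show "\<And>k c f. f \<in> SymLaurent k \<Longrightarrow> eta q k (\<lambda>x. c * f x) = (\<lambda>x. c * eta q k f x)"
      by (rule eta_scale[OF q])
    show "eta q 0 (\<lambda>_. 1) = (\<lambda>_. 1)" by (rule eta_one[OF q])
    show "\<And>k l f g x. f \<in> SymLaurent k \<Longrightarrow> g \<in> SymLaurent l \<Longrightarrow> generic q (k + l) x \<Longrightarrow>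
           eta_val q (k + l) (shuffle_val (zeta q t) k l (valS k f) (valS l g)) x
           = shuffle_val (zetaD q t) k l (valD q k (eta q k f)) (valD q l (eta q l g)) x"
      by (rule shuffle_ok[OF q])
    show "\<And>k. bij_betw (eta q k) (S_wheel q t k) (DFK_wheel q t k)" by (rule eta_wheel_bij[OF q n])
  qed
qed

end
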